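(* Let $0<q<1$ and $\Sigma\sim\mathrm{Mallows}(\mathbb{Z},q)$. Then for every $j\in\mathbb{Z}$, $$q\,\mathbb{P}(\Sigma(0)=j)\le\mathbb{P}(\Sigma(0)=j+1)\le\frac1q\,\mathbb{P}(\Sigma(0)=j).$$
   Context: For a finite set $A\subseteq\mathbb{Z}$ and a bijection $\pi:A\to A$, $\mathrm{inv}(\pi)$ is the number of pairs $i<j$ in $A$ with $\pi(i)>\pi(j)$, and $\Pi_A\sim\mathrm{Mallows}(A,q)$ means $\mathbb{P}(\Pi_A=\pi)\propto q^{\mathrm{inv}(\pi)}$ over bijections $\pi$ of $A$. For a bijection $\sigma$ of a set $B\subseteq\mathbb{Z}$ and finite $A\subseteq B$, the pattern $\sigma_A:A\to A$ is defined by $\sigma_A(a)=a_{(i)}$ when $\sigma(a)$ is the $i$-th smallest element of $\sigma[A]$, where $a_{(i)}$ is the $i$-th smallest element of $A$. For $0<q<1$, $\mathrm{Mallows}(\mathbb{Z},q)$ is Gnedin and Olshanski's bi-infinite Mallows measure: the law of a random bijection $\Sigma$ of $\mathbb{Z}$ such that $\Sigma_I\sim\mathrm{Mallows}(I,q)$ for every finite interval of integers $I$, and, with $I_n=\{-n,\dots,n\}$, almost surely for every $i\in\mathbb{Z}$ one has $\Sigma_{I_n}(i)=\Sigma(i)$ for all sufficiently large $n$. *)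

theory Defs
  imports "HOL-Probability.Probability"
begin

definition perms_on :: "int set \<Rightarrow> (int \<Rightarrow> int) set" where
  "perms_on A = {\<pi>. bij_betw \<pi> A A \<and> (\<forall>x. x \<notin> A \<longrightarrow> \<pi> x = x)}"

definition inv_count :: "int set \<Rightarrow> (int \<Rightarrow> int) \<Rightarrow> nat" where
  "inv_count A \<pi> = card {(i, j). i \<in> A \<and> j \<in> A \<and> i < j \<and> \<pi> i > \<pi> j}"

definition mallows_prob :: "real \<Rightarrow> int set \<Rightarrow> (int \<Rightarrow> int) \<Rightarrow> real" where
  "mallows_prob q A \<pi> =
     q ^ inv_count A \<pi> / (\<Sum>\<rho>\<in>perms_on A. q ^ inv_count A \<rho>)"

text \<open>Pattern sigma_A: sigma_A(a) = a_(i) where sigma(a) is the i-th smallest element of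
  sigma[A] (0-based rank: number of b in A with sigma b < sigma a), a_(i) the i-th smallest
  element of A; identity outside A.\<close>
definition pattern :: "(int \<Rightarrow> int) \<Rightarrow> int set \<Rightarrow> int \<Rightarrow> int" where
  "pattern \<sigma> A a =
     (if a \<in> A then sorted_list_of_set A ! card {b \<in> A. \<sigma> b < \<sigma> a} else a)"

text \<open>Sigma (a random function Z -> Z on the probability space M) has law Mallows(Z,q)
  in the sense of Gnedin--Olshanski.\<close>
definition is_mallows_Z :: "real \<Rightarrow> 'a measure \<Rightarrow> ('a \<Rightarrow> int \<Rightarrow> int) \<Rightarrow> bool" where
  "is_mallows_Z q M \<Sigma> \<longleftrightarrow>
     prob_space M \<and>
     \<Sigma> \<in> M \<rightarrow>\<^sub>M (\<Pi>\<^sub>M i\<in>(UNIV::int set). count_space (UNIV::int set)) \<and>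
     (AE \<omega> in M. bij (\<Sigma> \<omega>)) \<and>
     (\<forall>a b::int. \<forall>\<pi>\<in>perms_on {a..b}.
        measure M {\<omega> \<in> space M. pattern (\<Sigma> \<omega>) {a..b} = \<pi>} = mallows_prob q {a..b} \<pi>) \<and>
     (AE \<omega> in M. \<forall>i::int. eventually
        (\<lambda>n::nat. pattern (\<Sigma> \<omega>) {- int n..int n} i = \<Sigma> \<omega> i) sequentially)"

end

theory Submission
  imports Defs "HOL-Combinatorics.Permutations"
begin

lemma perms_on_eq: "perms_on A = {p. p permutes A}"
  unfolding perms_on_def
  by (auto intro: bij_imp_permutes permutes_imp_bij simp: permutes_not_in)

lemma finite_perms_on: "finite A \<Longrightarrow> finite (perms_on A)"
  by (simp add: perms_on_eq finite_permutations)

lemma id_perms_on: "id \<in> perms_on A"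
  by (simp add: perms_on_eq permutes_id)

lemma Z_pos:
  fixes q :: real
  assumes "finite A" "0 < q"
  shows "(\<Sum>\<rho>\<in>perms_on A. q ^ inv_count A \<rho>) > 0"
  by (rule sum_pos2[where i=id]) (use assms id_perms_on[of A] in \<open>auto simp: finite_perms_on\<close>)

lemma mallows_pos:
  assumes "finite A" "0 < q"
  shows "mallows_prob q A \<pi> > 0"
  using Z_pos[OF assms] assms unfolding mallows_prob_def by simp

lemma mallows_sum1:
  assumes "finite A" "0 < q"
  shows "(\<Sum>\<pi>\<in>perms_on A. mallows_prob q A \<pi>) = 1"
  using Z_pos[OF assms] unfolding mallows_prob_def
  by (simp add: sum_divide_distrib[symmetric])

definition tr :: "int \<Rightarrow> int \<Rightarrow> int" where
  "tr j x = (if x = j then j + 1 else if x = j + 1 then j else x)"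

lemma tr_tr[simp]: "tr j (tr j x) = x"
  unfolding tr_def by auto

lemma tr_comp_tr[simp]: "tr j \<circ> (tr j \<circ> \<pi>) = \<pi>"
  by (auto simp: fun_eq_iff)

lemma tr_perm:
  assumes "\<pi> \<in> perms_on A" "j \<in> A" "j + 1 \<in> A"
  shows "tr j \<circ> \<pi> \<in> perms_on A"
proof -
  have b: "bij_betw (tr j) A A"
    by (rule bij_betw_byWitness[where f'="tr j"]) (use assms in \<open>auto simp: tr_def\<close>)
  show ?thesis using assms b unfolding perms_on_def
    by (auto intro: bij_betw_trans simp: tr_def)
qed

lemma tr_order:
  assumes "x < y" "\<not> (x = j \<and> y = j + 1)"
  shows "tr j x < tr j y"
  using assms unfolding tr_def by auto

lemma inv_tr_le:
  assumes "finite A" "\<pi> \<in> perms_on A"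
  shows "inv_count A (tr j \<circ> \<pi>) \<le> inv_count A \<pi> + 1"
proof -
  have inj: "inj_on \<pi> A" using assms(2) unfolding perms_on_def bij_betw_def by auto
  define S where "S = {(i, k). i \<in> A \<and> k \<in> A \<and> i < k \<and> \<pi> i > \<pi> k}"
  define S' where "S' = {(i, k). i \<in> A \<and> k \<in> A \<and> i < k \<and> (tr j \<circ> \<pi>) i > (tr j \<circ> \<pi>) k}"
  define E where "E = {(i, k). i \<in> A \<and> k \<in> A \<and> \<pi> i = j \<and> \<pi> k = j + 1}"
  have sub: "S' \<subseteq> S \<union> E"
  proof
    fix p assume "p \<in> S'"
    then obtain i k where p: "p = (i, k)" "i \<in> A" "k \<in> A" "i < k" "tr j (\<pi> i) > tr j (\<pi> k)"
      unfolding S'_def by auto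
    have ne: "\<pi> i \<noteq> \<pi> k" using inj p by (metis inj_on_eq_iff less_irrefl)
    show "p \<in> S \<union> E"
    proof (cases "\<pi> i > \<pi> k")
      case True thus ?thesis using p unfolding S_def by auto
    next
      case False
      hence "\<pi> i < \<pi> k" using ne by auto
      hence "\<pi> i = j \<and> \<pi> k = j + 1" using tr_order[of "\<pi> i" "\<pi> k" j] p by force
      thus ?thesis using p unfolding E_def by auto
    qed
  qed
  have finA: "finite (A \<times> A)" using assms(1) by auto
  have fS: "finite S" by (rule finite_subset[OF _ finA]) (auto simp: S_def)
  have fE: "finite E" by (rule finite_subset[OF _ finA]) (auto simp: E_def)
  have cE: "card E \<le> 1"
  proof (cases "E = {}")
    case False
    then obtain i0 k0 where e0: "(i0, k0) \<in> E" by auto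
    have "E \<subseteq> {(i0, k0)}"
    proof
      fix p assume "p \<in> E"
      then obtain i k where "p = (i,k)" "i \<in> A" "k \<in> A" "\<pi> i = j" "\<pi> k = j + 1"
        unfolding E_def by auto
      note h = this
      have h0: "i0 \<in> A" "k0 \<in> A" "\<pi> i0 = j" "\<pi> k0 = j + 1" using e0 unfolding E_def by auto
      have "i = i0" by (rule inj_onD[OF inj]) (use h h0 in simp_all)
      moreover have "k = k0" by (rule inj_onD[OF inj]) (use h h0 in simp_all)
      ultimately show "p \<in> {(i0, k0)}" using h by simp
    qed
    hence "card E \<le> card {(i0, k0)}" by (intro card_mono) simp_all
    thus ?thesis by simp
  qed simp
  have "card S' \<le> card (S \<union> E)" by (rule card_mono) (use fS fE sub in auto)
  also have "\<dots> \<le> card S + card E" by (rule card_Un_le)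
  finally show ?thesis using cE unfolding inv_count_def S_def S'_def by simp
qed



lemma finite_step:
  assumes A: "finite A" "j \<in> A" "j + 1 \<in> A" and q: "0 < q" "q < 1"
  shows "q * (\<Sum>\<pi>\<in>{\<pi>\<in>perms_on A. \<pi> 0 = j}. mallows_prob q A \<pi>)
           \<le> (\<Sum>\<pi>\<in>{\<pi>\<in>perms_on A. \<pi> 0 = j + 1}. mallows_prob q A \<pi>) \<and>
         (\<Sum>\<pi>\<in>{\<pi>\<in>perms_on A. \<pi> 0 = j + 1}. mallows_prob q A \<pi>)
           \<le> (1 / q) * (\<Sum>\<pi>\<in>{\<pi>\<in>perms_on A. \<pi> 0 = j}. mallows_prob q A \<pi>)"
proof -
  let ?S = "{\<pi>\<in>perms_on A. \<pi> 0 = j}"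
  let ?T = "{\<pi>\<in>perms_on A. \<pi> 0 = j + 1}"
  have tj: "tr j j = j + 1" "tr j (j+1) = j" by (auto simp: tr_def)
  have eq: "(\<Sum>\<pi>\<in>?T. mallows_prob q A \<pi>) = (\<Sum>\<pi>\<in>?S. mallows_prob q A (tr j \<circ> \<pi>))"
    by (rule sum.reindex_bij_witness[where i="\<lambda>\<pi>. tr j \<circ> \<pi>" and j="\<lambda>\<pi>. tr j \<circ> \<pi>"])
       (use A tr_perm tj in auto)
  define Z where "Z = (\<Sum>\<rho>\<in>perms_on A. q ^ inv_count A \<rho>)"
  have Z: "Z > 0" unfolding Z_def by (rule Z_pos) (use A q in auto)
  have t1: "q * mallows_prob q A \<pi> \<le> mallows_prob q A (tr j \<circ> \<pi>)"
   and t2: "mallows_prob q A (tr j \<circ> \<pi>) \<le> (1/q) * mallows_prob q A \<pi>" if "\<pi> \<in> ?S" for \<pi>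
  proof -
    have p: "\<pi> \<in> perms_on A" using that by auto
    define a where "a = inv_count A \<pi>"
    define b where "b = inv_count A (tr j \<circ> \<pi>)"
    have ba: "b \<le> a + 1" unfolding a_def b_def by (rule inv_tr_le[OF A(1) p])
    have ab: "a \<le> b + 1" unfolding a_def b_def
      using inv_tr_le[OF A(1) tr_perm[OF p A(2,3)], of j] by simp
    have "q * q ^ a \<le> q ^ b" using power_decreasing[OF ba, of q] q by simp
    thus "q * mallows_prob q A \<pi> \<le> mallows_prob q A (tr j \<circ> \<pi>)"
      using Z unfolding mallows_prob_def Z_def[symmetric] a_def[symmetric] b_def[symmetric]
      by (simp add: divide_right_mono mult.commute)
    have "q * q ^ b \<le> q ^ a" using power_decreasing[OF ab, of q] q by simp
    hence "q ^ b \<le> (1/q) * q ^ a" using q by (simp add: field_simps)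
    hence "q ^ b / Z \<le> ((1/q) * q ^ a) / Z" using Z by (intro divide_right_mono) auto
    thus "mallows_prob q A (tr j \<circ> \<pi>) \<le> (1/q) * mallows_prob q A \<pi>"
      unfolding mallows_prob_def Z_def[symmetric] a_def[symmetric] b_def[symmetric]
      by simp
  qed
  have "(\<Sum>\<pi>\<in>?S. q * mallows_prob q A \<pi>) \<le> (\<Sum>\<pi>\<in>?S. mallows_prob q A (tr j \<circ> \<pi>))"
    by (rule sum_mono) (rule t1)
  moreover have "(\<Sum>\<pi>\<in>?S. mallows_prob q A (tr j \<circ> \<pi>)) \<le> (\<Sum>\<pi>\<in>?S. (1/q) * mallows_prob q A \<pi>)"
    by (rule sum_mono) (rule t2)
  ultimately show ?thesis unfolding eq sum_distrib_left by blast
qed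

lemma final_lim:
  fixes F :: "nat \<Rightarrow> int \<Rightarrow> real" and c :: "int \<Rightarrow> real" and q :: real
  assumes lim: "\<And>k. (\<lambda>n. F n k) \<longlonglongrightarrow> c k"
    and ev: "eventually (\<lambda>n. q * F n j \<le> F n (j+1) \<and> F n (j+1) \<le> (1/q) * F n j) sequentially"
  shows "q * c j \<le> c (j+1) \<and> c (j+1) \<le> (1/q) * c j"
proof
  show "q * c j \<le> c (j+1)"
    by (rule tendsto_le[OF trivial_limit_sequentially lim[of "j+1"] tendsto_mult_left[OF lim[of j]]])
       (rule eventually_mono[OF ev], simp)
  show "c (j+1) \<le> (1/q) * c j"
    by (rule tendsto_le[OF trivial_limit_sequentially tendsto_mult_left[OF lim[of j]] lim[of "j+1"]])
       (rule eventually_mono[OF ev], simp)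
qed

lemma evI: "eventually (\<lambda>n::nat. j \<in> {- int n..int n} \<and> j + 1 \<in> {- int n..int n}) sequentially"
  by (rule eventually_sequentiallyI[where c="nat \<bar>j\<bar> + 1"]) auto

theorem lemma8p1:
  fixes q :: real and M :: "'a measure" and \<Sigma> :: "'a \<Rightarrow> int \<Rightarrow> int"
  assumes "0 < q" and "q < 1" and "is_mallows_Z q M \<Sigma>"
  shows "\<forall>j::int.
           q * measure M {\<omega> \<in> space M. \<Sigma> \<omega> 0 = j} \<le> measure M {\<omega> \<in> space M. \<Sigma> \<omega> 0 = j + 1} \<and>
           measure M {\<omega> \<in> space M. \<Sigma> \<omega> 0 = j + 1} \<le> (1 / q) * measure M {\<omega> \<in> space M. \<Sigma> \<omega> 0 = j}"
proof -
  note ms = assms(3)[unfolded is_mallows_Z_def]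
  have ps: "prob_space M" and msig: "\<Sigma> \<in> M \<rightarrow>\<^sub>M (\<Pi>\<^sub>M i\<in>(UNIV::int set). count_space (UNIV::int set))"
   and mpat: "\<forall>a b::int. \<forall>\<pi>\<in>perms_on {a..b}.
        measure M {\<omega> \<in> space M. pattern (\<Sigma> \<omega>) {a..b} = \<pi>} = mallows_prob q {a..b} \<pi>"
   and mconv: "AE \<omega> in M. \<forall>i::int. eventually
        (\<lambda>n::nat. pattern (\<Sigma> \<omega>) {- int n..int n} i = \<Sigma> \<omega> i) sequentially"
    using ms by blast+
  interpret prob_space M by (rule ps)
  define I where "I = (\<lambda>n::nat. {- int n..int n})"
  have finI: "finite (I n)" for n unfolding I_def by auto
  define SS where "SS = (\<lambda>n \<pi>. {\<omega> \<in> space M. pattern (\<Sigma> \<omega>) (I n) = \<pi>})"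
  have SSm: "measure M (SS n \<pi>) = mallows_prob q (I n) \<pi>" if "\<pi> \<in> perms_on (I n)" for n \<pi>
    using mpat that unfolding SS_def I_def by blast
  have SSs: "SS n \<pi> \<in> sets M" if "\<pi> \<in> perms_on (I n)" for n \<pi>
  proof (rule ccontr)
    assume "SS n \<pi> \<notin> sets M"
    hence "measure M (SS n \<pi>) = 0" by (rule measure_notin_sets)
    thus False using SSm[OF that] mallows_pos[OF finI assms(1), of n \<pi>] by simp
  qed
  have disj: "disjoint_family_on (SS n) P" for n P
    unfolding disjoint_family_on_def SS_def by auto
  define F where "F = (\<lambda>n k. (\<Sum>\<pi>\<in>{\<pi>\<in>perms_on (I n). \<pi> 0 = k}. mallows_prob q (I n) \<pi>))"
  define B where "B = (\<lambda>n k. \<Union>\<pi>\<in>{\<pi>\<in>perms_on (I n). \<pi> 0 = k}. SS n \<pi>)"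
  define U where "U = (\<lambda>n. \<Union>\<pi>\<in>perms_on (I n). SS n \<pi>)"
  have Bm: "measure M (B n k) = F n k" for n k
  proof -
    have "measure M (B n k) = (\<Sum>\<pi>\<in>{\<pi>\<in>perms_on (I n). \<pi> 0 = k}. measure M (SS n \<pi>))"
      unfolding B_def
      by (rule measure_finite_Union) (use finite_perms_on[OF finI] SSs disj in auto)
    also have "\<dots> = F n k" unfolding F_def by (rule sum.cong) (auto simp: SSm)
    finally show ?thesis .
  qed
  have Bs: "B n k \<in> sets M" for n k
    unfolding B_def using finite_perms_on[OF finI, of n] SSs by (intro sets.finite_UN) auto
  have Um: "prob (U n) = 1" for n
  proof -
    have "measure M (U n) = (\<Sum>\<pi>\<in>perms_on (I n). measure M (SS n \<pi>))"
      unfolding U_def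
      by (rule measure_finite_Union) (use finite_perms_on[OF finI] SSs disj in auto)
    also have "\<dots> = 1" using mallows_sum1[OF finI assms(1), of n] by (simp add: SSm)
    finally show ?thesis .
  qed
  have AEU: "AE \<omega> in M. \<forall>n. \<omega> \<in> U n"
    unfolding AE_all_countable using Um by (auto intro: AE_prob_1)
  have AEconv: "AE \<omega> in M. \<forall>i::int. eventually
        (\<lambda>n::nat. pattern (\<Sigma> \<omega>) (I n) i = \<Sigma> \<omega> i) sequentially"
    using mconv unfolding I_def by simp
  have meas0: "(\<lambda>\<omega>. \<Sigma> \<omega> 0) \<in> M \<rightarrow>\<^sub>M count_space UNIV"
    using msig measurable_component_singleton[of 0 UNIV "\<lambda>_::int. count_space (UNIV::int set)"]
    by (auto intro: measurable_comp)
  define C where "C = (\<lambda>k. {\<omega> \<in> space M. \<Sigma> \<omega> 0 = k})"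
  have Cs: "C k \<in> sets M" for k
  proof -
    have "(\<lambda>\<omega>. \<Sigma> \<omega> 0) -` {k} \<inter> space M \<in> sets M"
      by (rule measurable_sets[OF meas0]) auto
    moreover have "(\<lambda>\<omega>. \<Sigma> \<omega> 0) -` {k} \<inter> space M = C k" unfolding C_def by auto
    ultimately show ?thesis by simp
  qed
  have BU: "B n k \<subseteq> space M" for n k unfolding B_def SS_def by auto
  have lim: "(\<lambda>n. F n k) \<longlonglongrightarrow> measure M (C k)" for k
  proof -
    have "(\<lambda>n. integral\<^sup>L M (indicator (B n k) :: 'a \<Rightarrow> real)) \<longlonglongrightarrow> integral\<^sup>L M (indicator (C k))"
    proof (rule integral_dominated_convergence[where w="\<lambda>_. 1"])
      show "indicator (C k) \<in> borel_measurable M" using Cs by simp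
      show "indicator (B n k) \<in> borel_measurable M" for n using Bs by simp
      show "integrable M (\<lambda>_. 1::real)" by simp
      show "AE x in M. norm (indicator (B n k) x :: real) \<le> 1" for n
        by (rule AE_I2) (simp add: indicator_def)
      show "AE x in M. (\<lambda>n. indicator (B n k) x :: real) \<longlonglongrightarrow> indicator (C k) x"
        using AEU AEconv
      proof eventually_elim
        case (elim \<omega>)
        have ev: "eventually (\<lambda>n. pattern (\<Sigma> \<omega>) (I n) 0 = \<Sigma> \<omega> 0) sequentially"
          using elim(2) by auto
        show ?case
        proof (rule tendsto_eventually)
          show "eventually (\<lambda>n. indicator (B n k) \<omega> = (indicator (C k) \<omega> :: real)) sequentially"
            using ev
          proof eventually_elim
            case (elim n)
            obtain \<pi> where \<pi>: "\<pi> \<in> perms_on (I n)" "\<omega> \<in> SS n \<pi>"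
              using \<open>\<forall>n. \<omega> \<in> U n\<close> unfolding U_def by blast
            have sp: "\<omega> \<in> space M" and pe: "pattern (\<Sigma> \<omega>) (I n) = \<pi>"
              using \<pi>(2) unfolding SS_def by auto
            have e1: "\<omega> \<in> B n k \<longleftrightarrow> \<pi> 0 = k"
            proof
              assume "\<omega> \<in> B n k"
              then obtain \<rho> where "\<rho> \<in> perms_on (I n)" "\<rho> 0 = k" "\<omega> \<in> SS n \<rho>"
                unfolding B_def by blast
              thus "\<pi> 0 = k" using pe unfolding SS_def by blast
            next
              assume "\<pi> 0 = k"
              thus "\<omega> \<in> B n k" using \<pi> unfolding B_def by blast
            qed
            have e2: "\<omega> \<in> C k \<longleftrightarrow> \<pi> 0 = k"
              using sp pe elim unfolding C_def by auto
            have "\<omega> \<in> B n k \<longleftrightarrow> \<omega> \<in> C k" using e1 e2 by simp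
            thus ?case by (simp add: indicator_def)
          qed
        qed
      qed
    qed
    moreover have "integral\<^sup>L M (indicator (B n k) :: 'a \<Rightarrow> real) = F n k" for n
      using BU Bm by (simp add: Int_absorb2)
    moreover have "integral\<^sup>L M (indicator (C k) :: 'a \<Rightarrow> real) = measure M (C k)"
      by (simp add: C_def Int_absorb2)
    ultimately show ?thesis by simp
  qed
  show ?thesis
  proof
    fix j :: int
    have ev: "eventually (\<lambda>n. q * F n j \<le> F n (j+1) \<and> F n (j+1) \<le> (1/q) * F n j) sequentially"
      using evI[of j]
    proof eventually_elim
      case (elim n)
      show ?case unfolding F_def I_def
        by (rule finite_step[OF _ elim[THEN conjunct1] elim[THEN conjunct2] assms(1,2)]) simp
    qed
    have "q * measure M (C j) \<le> measure M (C (j+1)) \<and> measure M (C (j+1)) \<le> (1/q) * measure M (C j)"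
      by (rule final_lim[OF lim ev])
    moreover have "C j = {\<omega> \<in> space M. \<Sigma> \<omega> 0 = j}" "C (j+1) = {\<omega> \<in> space M. \<Sigma> \<omega> 0 = j + 1}"
      unfolding C_def by simp_all
    ultimately show "q * measure M {\<omega> \<in> space M. \<Sigma> \<omega> 0 = j} \<le> measure M {\<omega> \<in> space M. \<Sigma> \<omega> 0 = j + 1} \<and>
           measure M {\<omega> \<in> space M. \<Sigma> \<omega> 0 = j + 1} \<le> (1 / q) * measure M {\<omega> \<in> space M. \<Sigma> \<omega> 0 = j}"
      by simp
  qed
qed

end
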